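(* Let $(X,\|\cdot\|,\preceq)$ be a partially ordered Banach space, with order induced by a cone $P$, that has the upper comparable property. Let $S$ be a nonempty, closed, convex and bounded subset of $X$. Let $A:X\to X$ and $B:S\to X$ be two operators satisfying: (a) there exist a generalized altering distance function $\psi:[0,\infty)\to[0,\infty)$, an upper semi-continuous function $\theta:[0,\infty)\to[0,\infty)$ and a lower semi-continuous function $\varphi:[0,\infty)\to[0,\infty)$ with $\theta(0)=\varphi(0)=0$ and $\psi(t)-\theta(t)+\varphi(t)>0$ for all $t>0$, such that $$\psi(\|Ax-Ay\|)\le \theta(\|x-y\|)-\varphi(\|x-y\|)\quad\text{for all } x,y\in X \text{ with } x\succeq y;$$ (b) there exists $x_0\in X$ with $x_0\preceq Ax_0$; (c) $A$ is continuous and non-decreasing with respect to $\preceq$, and $(I-A)^{-1}$ exists and is continuous; (d) $B$ is continuous and $B(S)$ is contained in a compact subset of the cone $P$; (e) for every $y\in S$ and $x\in X$, if $x=Ax+By$ then $x\in S$. Then the operator $A+B$ has a fixed point in $S$, i.e. there exists $z^*\in S$ with $Az^*+Bz^*=z^*$.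
   Context: $X$ is a real Banach space. A cone $P\subseteq X$ is a subset that is closed, nonempty, $P\neq\{0\}$, satisfies $\alpha x+\beta y\in P$ for all $x,y\in P$ and all reals $\alpha,\beta\ge 0$, and $P\cap(-P)=\{0\}$; it is assumed that $P$ has nonempty interior. The partial order is defined by $x\preceq y$ iff $y-x\in P$ (and $x\succeq y$ means $y\preceq x$); the paper refers to $P$ as the positive cone. The partially ordered Banach space $(X,\|\cdot\|,\preceq)$ has the upper comparable property if for every $x,y\in X$ there exists $z\in X$ with $x\preceq z$ and $y\preceq z$. A function $\psi:[0,\infty)\to[0,\infty)$ is a generalized altering distance function if it is lower semi-continuous and non-decreasing, and $\psi(t)=0$ if and only if $t=0$. $I$ denotes the identity operator on $X$. *)

theory Defs
  imports "HOL-Analysis.Analysis"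
begin

definition is_cone :: "'a::real_normed_vector set \<Rightarrow> bool" where
  "is_cone P \<longleftrightarrow> closed P \<and> P \<noteq> {} \<and> P \<noteq> {0}
     \<and> (\<forall>x\<in>P. \<forall>y\<in>P. \<forall>a b :: real. a \<ge> 0 \<longrightarrow> b \<ge> 0 \<longrightarrow> a *\<^sub>R x + b *\<^sub>R y \<in> P)
     \<and> P \<inter> uminus ` P = {0}"

definition cone_le :: "'a::real_normed_vector set \<Rightarrow> 'a \<Rightarrow> 'a \<Rightarrow> bool" where
  "cone_le P x y \<longleftrightarrow> y - x \<in> P"

definition upper_comparable :: "'a::real_normed_vector set \<Rightarrow> bool" where
  "upper_comparable P \<longleftrightarrow> (\<forall>x y. \<exists>z. cone_le P x z \<and> cone_le P y z)"

definition lsc_on :: "real set \<Rightarrow> (real \<Rightarrow> real) \<Rightarrow> bool" where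
  "lsc_on S f \<longleftrightarrow> (\<forall>x\<in>S. \<forall>c. c < f x \<longrightarrow> (\<forall>\<^sub>F y in at x within S. c < f y))"

definition usc_on :: "real set \<Rightarrow> (real \<Rightarrow> real) \<Rightarrow> bool" where
  "usc_on S f \<longleftrightarrow> (\<forall>x\<in>S. \<forall>c. f x < c \<longrightarrow> (\<forall>\<^sub>F y in at x within S. f y < c))"

definition gen_altering_distance :: "(real \<Rightarrow> real) \<Rightarrow> bool" where
  "gen_altering_distance \<psi> \<longleftrightarrow> (\<forall>t\<ge>0. \<psi> t \<ge> 0) \<and> lsc_on {0..} \<psi> \<and> mono_on {0..} \<psi>
     \<and> (\<forall>t\<ge>0. \<psi> t = 0 \<longleftrightarrow> t = 0)"

end

theory Submission
  imports Defs
begin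

lemma approx_brouwer_cube:
  fixes n :: nat and g :: "(nat \<Rightarrow> real) \<Rightarrow> (nat \<Rightarrow> real)" and e :: real
  assumes into: "\<And>t. (\<forall>i<n. 0 \<le> t i \<and> t i \<le> 1) \<Longrightarrow> (\<forall>i<n. 0 \<le> g t i \<and> g t i \<le> 1)"
    and uc: "\<And>e. e > 0 \<Longrightarrow> \<exists>d>0. \<forall>s t. (\<forall>i<n. 0 \<le> s i \<and> s i \<le> 1) \<longrightarrow> (\<forall>i<n. 0 \<le> t i \<and> t i \<le> 1)
               \<longrightarrow> (\<forall>i<n. \<bar>s i - t i\<bar> < d) \<longrightarrow> (\<forall>i<n. \<bar>g s i - g t i\<bar> < e)"
    and e: "e > 0"
  shows "\<exists>t. (\<forall>i<n. 0 \<le> t i \<and> t i \<le> 1) \<and> (\<forall>i<n. \<bar>g t i - t i\<bar> < e)"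
proof -
  obtain d where d: "d > 0" and dP: "\<And>s t. (\<forall>i<n. 0 \<le> s i \<and> s i \<le> 1) \<Longrightarrow> (\<forall>i<n. 0 \<le> t i \<and> t i \<le> 1)
               \<Longrightarrow> (\<forall>i<n. \<bar>s i - t i\<bar> < d) \<Longrightarrow> (\<forall>i<n. \<bar>g s i - g t i\<bar> < e/2)"
    using uc[of "e/2"] e by auto
  obtain p :: nat where p: "real p > 1 / min d (e/2)"
    using reals_Archimedean2 by blast
  have md: "min d (e/2) > 0" using d e by auto
  have pp: "real p > 0" using p md
    by (smt (verit) divide_pos_pos)
  then have p0: "0 < p" by simp
  have ipm: "1 / real p < min d (e/2)"
    using p md pp by (smt (verit, ccfv_SIG) divide_less_eq mult.commute pos_divide_less_eq)
  then have ip: "1 / real p < d" "1 / real p < e/2" by auto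
  define emb :: "(nat \<Rightarrow> nat) \<Rightarrow> nat \<Rightarrow> real" where "emb x = (\<lambda>i. real (x i) / real p)" for x
  define lab :: "(nat \<Rightarrow> real) \<Rightarrow> nat \<Rightarrow> nat" where
    "lab t i = (if t i = 0 then 0 else if t i = 1 then 1 else if t i \<le> g t i then 0 else 1)" for t i
  have cube: "\<forall>i<n. 0 \<le> emb x i \<and> emb x i \<le> 1" if "\<forall>i<n. x i \<le> p" for x
    using that pp by (auto simp: emb_def field_simps)
  obtain q where q1: "\<forall>i<n. q i < p"
    and q2: "\<forall>i<n. \<exists>r s. (\<forall>j<n. q j \<le> r j \<and> r j \<le> q j + 1) \<and>
               (\<forall>j<n. q j \<le> s j \<and> s j \<le> q j + 1) \<and> lab (emb r) i \<noteq> lab (emb s) i"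
  proof (rule kuhn_lemma[of p n "\<lambda>x. lab (emb x)"])
    show "0 < p" by fact
    show "\<forall>x. (\<forall>i<n. x i \<le> p) \<longrightarrow> (\<forall>i<n. lab (emb x) i = 0 \<or> lab (emb x) i = 1)"
      by (auto simp: lab_def)
    show "\<forall>x. (\<forall>i<n. x i \<le> p) \<longrightarrow> (\<forall>i<n. x i = 0 \<longrightarrow> lab (emb x) i = 0)"
      by (auto simp: lab_def emb_def)
    show "\<forall>x. (\<forall>i<n. x i \<le> p) \<longrightarrow> (\<forall>i<n. x i = p \<longrightarrow> lab (emb x) i = 1)"
      using pp by (auto simp: lab_def emb_def)
  qed auto
  define z where "z = emb q"
  have zc: "\<forall>i<n. 0 \<le> z i \<and> z i \<le> 1"
    unfolding z_def by (rule cube) (use q1 in auto)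
  have near: "\<forall>i<n. \<bar>emb r i - z i\<bar> \<le> 1 / real p" if "\<forall>j<n. q j \<le> r j \<and> r j \<le> q j + 1" for r
  proof (intro allI impI)
    fix i assume "i < n"
    then have "real (q i) \<le> real (r i)" "real (r i) \<le> real (q i) + 1" using that by auto
    then have a: "0 \<le> real (r i) - real (q i)" "real (r i) - real (q i) \<le> 1" by auto
    have "emb r i - z i = (real (r i) - real (q i)) / real p"
      by (simp add: emb_def z_def diff_divide_distrib)
    moreover have "(real (r i) - real (q i)) / real p \<le> 1 / real p"
      using a pp by (simp add: divide_right_mono)
    moreover have "0 \<le> (real (r i) - real (q i)) / real p"
      using a pp by simp
    ultimately show "\<bar>emb r i - z i\<bar> \<le> 1 / real p" by simp
  qed
  have rc: "\<forall>i<n. 0 \<le> emb r i \<and> emb r i \<le> 1" if "\<forall>j<n. q j \<le> r j \<and> r j \<le> q j + 1" for r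
    using that q1 by (intro cube) (metis Suc_eq_plus1 Suc_leI order_trans)
  have "\<bar>g z i - z i\<bar> < e" if i: "i < n" for i
  proof -
    obtain r s where r: "\<forall>j<n. q j \<le> r j \<and> r j \<le> q j + 1" and s: "\<forall>j<n. q j \<le> s j \<and> s j \<le> q j + 1"
      and l: "lab (emb r) i \<noteq> lab (emb s) i"
      using q2 i by blast
    have gr: "\<bar>g (emb r) i - g z i\<bar> < e/2"
      using dP[OF rc[OF r] zc] near[OF r] ip i by (meson le_less_trans)
    have gs: "\<bar>g (emb s) i - g z i\<bar> < e/2"
      using dP[OF rc[OF s] zc] near[OF s] ip i by (meson le_less_trans)
    have nr: "\<bar>emb r i - z i\<bar> \<le> 1/real p" using near[OF r] i by auto
    have ns: "\<bar>emb s i - z i\<bar> \<le> 1/real p" using near[OF s] i by auto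
    have gri: "0 \<le> g (emb r) i \<and> g (emb r) i \<le> 1" using into[OF rc[OF r]] i by auto
    have gsi: "0 \<le> g (emb s) i \<and> g (emb s) i \<le> 1" using into[OF rc[OF s]] i by auto
    have L0: "emb u i \<le> g (emb u) i" if "lab (emb u) i = 0" "0 \<le> g (emb u) i" for u
      using that by (auto simp: lab_def split: if_splits)
    have L1: "g (emb u) i \<le> emb u i" if "lab (emb u) i = 1" "g (emb u) i \<le> 1" for u
      using that by (auto simp: lab_def split: if_splits)
    have lr: "lab (emb r) i = 0 \<or> lab (emb r) i = 1" "lab (emb s) i = 0 \<or> lab (emb s) i = 1"
      by (auto simp: lab_def)
    have A: "emb r i \<le> g (emb r) i \<and> g (emb s) i \<le> emb s i \<or> g (emb r) i \<le> emb r i \<and> emb s i \<le> g (emb s) i"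
      using lr l L0[of r] L1[of r] L0[of s] L1[of s] gri gsi by auto
    have "g (emb r) i - g z i < e/2" "g z i - g (emb r) i < e/2"
      "g (emb s) i - g z i < e/2" "g z i - g (emb s) i < e/2"
      "emb r i - z i \<le> 1/real p" "z i - emb r i \<le> 1/real p"
      "emb s i - z i \<le> 1/real p" "z i - emb s i \<le> 1/real p"
      using gr gs nr ns unfolding abs_less_iff abs_le_iff by auto
    with A ip show ?thesis unfolding abs_less_iff by linarith
  qed
  then show ?thesis using zc by blast
qed

lemma ratio_lip:
  fixes a a' D D' c :: real
  assumes "c > 0" "c \<le> D" "c \<le> D'" "0 \<le> a'" "a' \<le> D'"
  shows "\<bar>a / D - a' / D'\<bar> \<le> (\<bar>a - a'\<bar> + \<bar>D - D'\<bar>) / c"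
proof -
  have "a / D - a' / D' = (a - a') / D + (a' / D') * ((D' - D) / D)"
    using assms by (simp add: field_simps)
  also have "\<bar>\<dots>\<bar> \<le> \<bar>a - a'\<bar> / D + (a' / D') * (\<bar>D' - D\<bar> / D)"
    using assms by (auto simp: abs_mult intro!: order_trans[OF abs_triangle_ineq])
  also have "\<dots> \<le> \<bar>a - a'\<bar> / c + 1 * (\<bar>D' - D\<bar> / c)"
  proof (intro add_mono mult_mono)
    show "\<bar>a - a'\<bar> / D \<le> \<bar>a - a'\<bar> / c" using assms by (intro divide_left_mono) auto
    show "a' / D' \<le> 1" using assms by auto
    show "\<bar>D' - D\<bar> / D \<le> \<bar>D' - D\<bar> / c" using assms by (intro divide_left_mono) auto
  qed (use assms in auto)
  finally show ?thesis by (simp add: add_divide_distrib abs_minus_commute)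
qed

lemma aux_eq:
  fixes k Y d1 :: real
  assumes "k > 0" "Y \<ge> 0"
  shows "k * (k * (d1 / (k * k * (Y + 1)))) * Y = d1 * (Y / (Y + 1))"
proof -
  have kk: "k * k \<noteq> 0" using assms by simp
  have "k * (k * (d1 / (k * k * (Y + 1)))) = (k * k) * d1 / ((k * k) * (Y + 1))" by simp
  also have "\<dots> = d1 / (Y + 1)" using kk by (rule mult_divide_mult_cancel_left)
  finally show ?thesis by simp
qed

lemma max_lip: "\<bar>max (1::real) a - max 1 b\<bar> \<le> \<bar>a - b\<bar>"
  by (auto simp: max_def abs_if)

lemma mu_lip:
  fixes z z' y :: "'a::real_normed_vector"
  shows "\<bar>max 0 (e - norm (z - y)) - max 0 (e - norm (z' - y))\<bar> \<le> norm (z - z')"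
proof -
  have "\<bar>norm (z - y) - norm (z' - y)\<bar> \<le> norm ((z - y) - (z' - y))"
    by (rule norm_triangle_ineq3)
  then have "\<bar>norm (z - y) - norm (z' - y)\<bar> \<le> norm (z - z')" by simp
  then show ?thesis by (simp add: max_def abs_le_iff)
qed

lemma schauder_approx:
  fixes T :: "'a::real_normed_vector \<Rightarrow> 'a" and \<epsilon> :: real
  assumes S: "convex S" and Tc: "continuous_on S T" and K: "compact K" "K \<subseteq> S" "T ` S \<subseteq> K" "K \<noteq> {}"
    and ep: "\<epsilon> > 0"
  shows "\<exists>x\<in>S. norm (T x - x) < 2 * \<epsilon>"
proof -
  obtain F where F: "F \<subseteq> K" "finite F" "K \<subseteq> \<Union> ((\<lambda>y. ball y (\<epsilon>/2)) ` F)"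
  proof (rule compactE_image[OF K(1), of K "\<lambda>y. ball y (\<epsilon>/2)"])
    show "K \<subseteq> \<Union> ((\<lambda>y. ball y (\<epsilon>/2)) ` K)" using ep by force
  qed auto
  obtain ys where ys: "set ys = F" using finite_list[OF F(2)] by blast
  have "F \<noteq> {}" using F K(4) by blast
  then have lpos: "length ys > 0" using ys by auto
  define n where "n = length ys - 1"
  define y where "y j = ys ! j" for j
  have yF: "y j \<in> F" if "j \<le> n" for j
  proof -
    have "j < length ys" using that lpos unfolding n_def by linarith
    from nth_mem[OF this] show ?thesis using ys unfolding y_def by simp
  qed
  have Fy: "\<exists>j\<le>n. y j = f" if "f \<in> F" for f
  proof -
    have "f \<in> set ys" using that ys by simp
    then obtain i where "i < length ys" "ys ! i = f" unfolding in_set_conv_nth by blast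
    then show ?thesis unfolding y_def n_def by (intro exI[of _ i]) auto
  qed
  define H where "H = convex hull F"
  have Hc: "compact H" unfolding H_def using finite_imp_compact_convex_hull[OF F(2)] .
  have HS: "H \<subseteq> S" proof -
    have "F \<subseteq> S" using F(1) K(2) by (rule order_trans)
    then show ?thesis unfolding H_def using S by (rule hull_minimal)
  qed
  have yH: "y j \<in> H" if "j \<le> n" for j using yF[OF that] unfolding H_def by (simp add: hull_inc)
  define c where "c = \<epsilon> / 2"
  have c: "c > 0" using ep by (simp add: c_def)
  define \<mu> where "\<mu> j z = max 0 (\<epsilon> - norm (z - y j))" for j z
  define D where "D z = (\<Sum>j\<le>n. \<mu> j z)" for z
  have mu0: "0 \<le> \<mu> j z" for j z by (simp add: \<mu>_def)
  have muD: "\<mu> j z \<le> D z" if "j \<le> n" for j z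
    unfolding D_def using that mu0 by (intro member_le_sum) auto
  have Dpos: "c \<le> D z" if zK: "z \<in> K" for z
  proof -
    obtain f where f: "f \<in> F" "z \<in> ball f (\<epsilon>/2)" using F(3) zK by blast
    obtain j where j: "j \<le> n" "y j = f" using Fy[OF f(1)] by blast
    have "norm (z - y j) < \<epsilon>/2" using f(2) j by (simp add: dist_norm norm_minus_commute)
    then have "c \<le> \<mu> j z" unfolding \<mu>_def c_def by linarith
    then show ?thesis using muD[OF j(1), of z] by linarith
  qed
  define W where "W j z = \<mu> j z / D z" for j z
  have W01: "0 \<le> W j z \<and> W j z \<le> 1" if "z \<in> K" "j \<le> n" for j z
    using Dpos[OF that(1)] c muD[OF that(2)] mu0 unfolding W_def by auto
  have Wsum: "(\<Sum>j\<le>n. W j z) = 1" if "z \<in> K" for z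
    using Dpos[OF that] c unfolding W_def D_def by (simp add: sum_divide_distrib[symmetric])
  have atM: "{..n} = insert n {..<n}" by auto
  have Wsum': "(\<Sum>j<n. W j z) = 1 - W n z" if "z \<in> K" for z
    using Wsum[OF that] unfolding atM by simp
  define a where "a l j = (if j = n then 1 - (\<Sum>i<n. l i) else l j)" for l :: "nat \<Rightarrow> real" and j
  define \<Phi> where "\<Phi> l = (\<Sum>j\<le>n. a l j *\<^sub>R y j)" for l
  define m where "m t = max 1 (\<Sum>j<n. t j)" for t :: "nat \<Rightarrow> real"
  define \<rho> where "\<rho> t = (\<lambda>i. t i / m t)" for t
  define cube where "cube t \<longleftrightarrow> (\<forall>i<n. 0 \<le> t i \<and> t i \<le> 1)" for t :: "nat \<Rightarrow> real"
  define g where "g t = (\<lambda>i. W i (T (\<Phi> (\<rho> t))))" for t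
  have m1: "1 \<le> m t" for t by (simp add: m_def)
  have rho_simp: "(\<forall>i<n. 0 \<le> \<rho> t i) \<and> (\<Sum>i<n. \<rho> t i) \<le> 1" if "cube t" for t
  proof
    show "\<forall>i<n. 0 \<le> \<rho> t i" using that m1[of t] by (auto simp: cube_def \<rho>_def)
    have "(\<Sum>i<n. \<rho> t i) = (\<Sum>i<n. t i) / m t" by (simp add: \<rho>_def sum_divide_distrib)
    also have "\<dots> \<le> 1" using m1[of t] by (simp add: m_def)
    finally show "(\<Sum>i<n. \<rho> t i) \<le> 1" .
  qed
  have PhiH: "\<Phi> l \<in> H" if "\<forall>i<n. 0 \<le> l i" "(\<Sum>i<n. l i) \<le> 1" for l
    unfolding \<Phi>_def
  proof (rule convex_sum)
    show "convex H" by (simp add: H_def convex_convex_hull)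
    show "sum (a l) {..n} = 1" unfolding atM by (simp add: a_def)
    show "0 \<le> a l i" if "i \<in> {..n}" for i using that \<open>\<forall>i<n. 0 \<le> l i\<close> \<open>(\<Sum>i<n. l i) \<le> 1\<close>
      by (auto simp: a_def)
    show "y i \<in> H" if "i \<in> {..n}" for i using yH that by auto
  qed auto
  have TPhi: "T (\<Phi> (\<rho> t)) \<in> K" if "cube t" for t
    using PhiH[of "\<rho> t"] rho_simp[OF that] HS K(3) by blast
  have gcube: "cube (g t)" if "cube t" for t
    using W01[OF TPhi[OF that]] by (auto simp: cube_def g_def)
  have rho_lip: "\<bar>\<rho> s i - \<rho> t i\<bar> \<le> (real n + 1) * \<delta>"
    if "cube s" "cube t" "\<forall>j<n. \<bar>s j - t j\<bar> \<le> \<delta>" "i < n" for s t \<delta> i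
  proof -
    have "\<bar>m s - m t\<bar> \<le> \<bar>(\<Sum>j<n. s j) - (\<Sum>j<n. t j)\<bar>" unfolding m_def by (rule max_lip)
    also have "\<dots> = \<bar>\<Sum>j<n. s j - t j\<bar>" by (simp add: sum_subtractf)
    also have "\<dots> \<le> (\<Sum>j<n. \<bar>s j - t j\<bar>)" by (rule sum_abs)
    also have "\<dots> \<le> (\<Sum>j<n. \<delta>)" using that(3) by (intro sum_mono) auto
    finally have mm: "\<bar>m s - m t\<bar> \<le> real n * \<delta>" by simp
    have "\<bar>\<rho> s i - \<rho> t i\<bar> \<le> (\<bar>s i - t i\<bar> + \<bar>m s - m t\<bar>) / 1"
      unfolding \<rho>_def using that(2,4) m1[of s] m1[of t] by (intro ratio_lip) (auto simp: cube_def)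
    also have "\<dots> \<le> \<delta> + real n * \<delta>"
    proof -
      have "\<bar>s i - t i\<bar> \<le> \<delta>" using that(3,4) by blast
      then show ?thesis using mm by simp
    qed
    finally show ?thesis by (simp add: algebra_simps)
  qed
  define Y where "Y = (\<Sum>j\<le>n. norm (y j))"
  have Y0: "0 \<le> Y" unfolding Y_def by (simp add: sum_nonneg)
  have Phi_lip: "norm (\<Phi> l - \<Phi> l') \<le> (real n + 1) * \<eta> * Y"
    if "\<forall>i<n. \<bar>l i - l' i\<bar> \<le> \<eta>" "0 \<le> \<eta>" for l l' \<eta>
  proof -
    have aa: "\<bar>a l j - a l' j\<bar> \<le> (real n + 1) * \<eta>" if "j \<le> n" for j
    proof (cases "j = n")
      case True
      have "\<bar>a l j - a l' j\<bar> = \<bar>\<Sum>i<n. l' i - l i\<bar>" using True by (simp add: a_def sum_subtractf)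
      also have "\<dots> \<le> (\<Sum>i<n. \<bar>l' i - l i\<bar>)" by (rule sum_abs)
      also have "\<dots> \<le> (\<Sum>i<n. \<eta>)" using \<open>\<forall>i<n. \<bar>l i - l' i\<bar> \<le> \<eta>\<close> by (intro sum_mono) (auto simp: abs_minus_commute)
      finally show ?thesis using \<open>0 \<le> \<eta>\<close> by (simp add: algebra_simps)
    next
      case False
      then have "\<bar>a l j - a l' j\<bar> \<le> \<eta>" using that \<open>\<forall>i<n. \<bar>l i - l' i\<bar> \<le> \<eta>\<close> by (simp add: a_def)
      also have "\<eta> \<le> (real n + 1) * \<eta>"
      proof -
        have "0 \<le> real n * \<eta>" using \<open>0 \<le> \<eta>\<close> by simp
        then show ?thesis by (simp add: algebra_simps)
      qed
      finally show ?thesis .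
    qed
    have "\<Phi> l - \<Phi> l' = (\<Sum>j\<le>n. (a l j - a l' j) *\<^sub>R y j)"
      by (simp add: \<Phi>_def sum_subtractf scaleR_diff_left)
    then have "norm (\<Phi> l - \<Phi> l') \<le> (\<Sum>j\<le>n. norm ((a l j - a l' j) *\<^sub>R y j))"
      by (metis norm_sum)
    also have "\<dots> \<le> (\<Sum>j\<le>n. (real n + 1) * \<eta> * norm (y j))"
      using aa by (intro sum_mono) (simp add: mult_right_mono)
    also have "\<dots> = (real n + 1) * \<eta> * Y" by (simp add: Y_def sum_distrib_left)
    finally show ?thesis .
  qed
  have W_lip: "\<bar>W i z - W i z'\<bar> \<le> (real n + 2) * norm (z - z') / c"
    if "z \<in> K" "z' \<in> K" "i \<le> n" for i z z'
  proof -
    have "\<bar>D z - D z'\<bar> = \<bar>\<Sum>j\<le>n. \<mu> j z - \<mu> j z'\<bar>" by (simp add: D_def sum_subtractf)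
    also have "\<dots> \<le> (\<Sum>j\<le>n. \<bar>\<mu> j z - \<mu> j z'\<bar>)" by (rule sum_abs)
    also have "\<dots> \<le> (\<Sum>j\<le>n. norm (z - z'))" unfolding \<mu>_def by (intro sum_mono mu_lip)
    finally have DD: "\<bar>D z - D z'\<bar> \<le> (real n + 1) * norm (z - z')" by (simp add: add.commute)
    have "\<bar>W i z - W i z'\<bar> \<le> (\<bar>\<mu> i z - \<mu> i z'\<bar> + \<bar>D z - D z'\<bar>) / c"
      unfolding W_def using c Dpos that muD mu0 by (intro ratio_lip) auto
    also have "\<dots> \<le> (norm (z - z') + (real n + 1) * norm (z - z')) / c"
      using c DD unfolding \<mu>_def by (intro divide_right_mono add_mono mu_lip) auto
    finally show ?thesis by (simp add: algebra_simps)
  qed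
  have uc: "\<exists>d>0. \<forall>s t. cube s \<longrightarrow> cube t \<longrightarrow> (\<forall>i<n. \<bar>s i - t i\<bar> < d) \<longrightarrow> (\<forall>i<n. \<bar>g s i - g t i\<bar> < e)"
    if e: "e > 0" for e
  proof -
    have "uniformly_continuous_on H T" using Hc Tc HS by (meson compact_uniformly_continuous continuous_on_subset)
    moreover have "e * c / (real n + 2) > 0" using e c by simp
    ultimately obtain d1 where d1: "d1 > 0" "\<And>x x'. x \<in> H \<Longrightarrow> x' \<in> H \<Longrightarrow> dist x' x < d1 \<Longrightarrow> dist (T x') (T x) < e * c / (real n + 2)"
      unfolding uniformly_continuous_on_def by (meson)
    define d where "d = d1 / ((real n + 1) * (real n + 1) * (Y + 1))"
    have d: "d > 0" using d1 Y0 by (simp add: d_def)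
    show ?thesis
    proof (intro exI[of _ d] conjI allI impI d)
      fix s t i assume st: "cube s" "cube t" "\<forall>i<n. \<bar>s i - t i\<bar> < d" and i: "i < n"
      have "\<forall>i<n. \<bar>\<rho> s i - \<rho> t i\<bar> \<le> (real n + 1) * d"
        using st by (intro allI impI rho_lip) (auto intro: less_imp_le)
      then have "norm (\<Phi> (\<rho> s) - \<Phi> (\<rho> t)) \<le> (real n + 1) * ((real n + 1) * d) * Y"
        using d by (intro Phi_lip) auto
      also have "\<dots> = d1 * (Y / (Y + 1))" unfolding d_def by (rule aux_eq) (use Y0 in auto)
      also have "\<dots> < d1" using d1 Y0 by (simp add: field_simps)
      finally have "dist (\<Phi> (\<rho> s)) (\<Phi> (\<rho> t)) < d1" by (simp add: dist_norm)
      moreover have "\<Phi> (\<rho> s) \<in> H" using rho_simp[OF st(1)] by (intro PhiH) auto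
      moreover have "\<Phi> (\<rho> t) \<in> H" using rho_simp[OF st(2)] by (intro PhiH) auto
      ultimately have "dist (T (\<Phi> (\<rho> s))) (T (\<Phi> (\<rho> t))) < e * c / (real n + 2)"
        using d1(2) by blast
      then have "(real n + 2) * norm (T (\<Phi> (\<rho> s)) - T (\<Phi> (\<rho> t))) / c < e"
        using c by (simp add: dist_norm field_simps)
      moreover have "\<bar>g s i - g t i\<bar> \<le> (real n + 2) * norm (T (\<Phi> (\<rho> s)) - T (\<Phi> (\<rho> t))) / c"
        unfolding g_def using W_lip TPhi st i by auto
      ultimately show "\<bar>g s i - g t i\<bar> < e" by linarith
    qed
  qed
  define \<eta> where "\<eta> = \<epsilon> / ((real n + 1) * (real n + 1) * (Y + 1))"
  have eta: "\<eta> > 0" using ep Y0 by (simp add: \<eta>_def)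
  obtain t where t: "cube t" "\<forall>i<n. \<bar>g t i - t i\<bar> < \<eta>"
  proof -
    have "\<exists>t. (\<forall>i<n. 0 \<le> t i \<and> t i \<le> 1) \<and> (\<forall>i<n. \<bar>g t i - t i\<bar> < \<eta>)"
    proof (rule approx_brouwer_cube[OF _ _ eta])
      show "\<forall>i<n. 0 \<le> g t i \<and> g t i \<le> 1" if "\<forall>i<n. 0 \<le> t i \<and> t i \<le> 1" for t
        using gcube[of t] that unfolding cube_def by blast
      show "\<exists>d>0. \<forall>s t. (\<forall>i<n. 0 \<le> s i \<and> s i \<le> 1) \<longrightarrow> (\<forall>i<n. 0 \<le> t i \<and> t i \<le> 1)
               \<longrightarrow> (\<forall>i<n. \<bar>s i - t i\<bar> < d) \<longrightarrow> (\<forall>i<n. \<bar>g s i - g t i\<bar> < e)" if "e > 0" for e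
        using uc[OF that] unfolding cube_def .
    qed
    then show ?thesis using that unfolding cube_def by blast
  qed
  define x where "x = \<Phi> (\<rho> t)"
  define z where "z = T x"
  define w where "w = g t"
  have xS: "x \<in> S" using PhiH rho_simp[OF t(1)] HS unfolding x_def by blast
  have zK: "z \<in> K" unfolding z_def x_def using TPhi[OF t(1)] .
  have wc: "cube w" unfolding w_def using gcube[OF t(1)] .
  have wW: "w i = W i z" for i unfolding w_def g_def z_def x_def by simp
  have wsum: "(\<Sum>i<n. w i) \<le> 1" using Wsum'[OF zK] W01[OF zK] by (simp add: wW)
  have "m w = 1" using wsum by (simp add: m_def)
  then have rw: "\<rho> w = w" by (simp add: \<rho>_def)
  have "\<forall>i<n. \<bar>\<rho> t i - \<rho> w i\<bar> \<le> (real n + 1) * \<eta>"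
    using t wc by (intro allI impI rho_lip) (auto simp: w_def abs_minus_commute intro: less_imp_le)
  then have "norm (\<Phi> (\<rho> t) - \<Phi> (\<rho> w)) \<le> (real n + 1) * ((real n + 1) * \<eta>) * Y"
    using eta by (intro Phi_lip) auto
  also have "\<dots> = \<epsilon> * (Y / (Y + 1))" unfolding \<eta>_def by (rule aux_eq) (use Y0 in auto)
  also have "\<dots> < \<epsilon>" using ep Y0 by (simp add: field_simps)
  finally have n1: "norm (x - \<Phi> w) < \<epsilon>" by (simp add: x_def rw)
  have aw: "a w j = W j z" if "j \<le> n" for j
    using Wsum'[OF zK] by (simp add: a_def wW)
  have Pw: "\<Phi> w = (\<Sum>j\<le>n. W j z *\<^sub>R y j)" unfolding \<Phi>_def using aw by (intro sum.cong) auto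
  have "\<Phi> w - z = (\<Sum>j\<le>n. W j z *\<^sub>R (y j - z))"
  proof -
    have "(\<Sum>j\<le>n. W j z *\<^sub>R (y j - z)) = \<Phi> w - (\<Sum>j\<le>n. W j z) *\<^sub>R z"
      by (simp add: Pw scaleR_diff_right sum_subtractf scaleR_sum_left)
    then show ?thesis using Wsum[OF zK] by simp
  qed
  then have "norm (\<Phi> w - z) \<le> (\<Sum>j\<le>n. norm (W j z *\<^sub>R (y j - z)))" by (metis norm_sum)
  also have "\<dots> \<le> (\<Sum>j\<le>n. W j z * \<epsilon>)"
  proof (intro sum_mono)
    fix j assume j: "j \<in> {..n}"
    show "norm (W j z *\<^sub>R (y j - z)) \<le> W j z * \<epsilon>"
    proof (cases "norm (z - y j) < \<epsilon>")
      case True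
      then show ?thesis using W01[OF zK, of j] j
        by (simp add: norm_minus_commute mult_left_mono)
    next
      case False
      then have "\<mu> j z = 0" by (simp add: \<mu>_def)
      then show ?thesis by (simp add: W_def)
    qed
  qed
  also have "\<dots> = \<epsilon>" using Wsum[OF zK] by (simp add: sum_distrib_right[symmetric])
  finally have n2: "norm (\<Phi> w - z) \<le> \<epsilon>" .
  have "norm (T x - x) \<le> norm (z - \<Phi> w) + norm (\<Phi> w - x)"
  proof -
    have "T x - x = (z - \<Phi> w) + (\<Phi> w - x)" by (simp add: z_def)
    then show ?thesis by (metis norm_triangle_ineq)
  qed
  also have "\<dots> < 2 * \<epsilon>" using n1 n2 by (simp add: norm_minus_commute)
  finally show ?thesis using xS by blast
qed


lemma schauder:
  fixes T :: "'a::real_normed_vector \<Rightarrow> 'a"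
  assumes S: "S \<noteq> {}" "closed S" "convex S" and Tc: "continuous_on S T" and TS: "T ` S \<subseteq> S"
    and C: "compact C" "T ` S \<subseteq> C"
  shows "\<exists>z\<in>S. T z = z"
proof -
  define K where "K = C \<inter> closure (T ` S)"
  have Kc: "compact K" unfolding K_def using C(1) by (simp add: compact_Int_closed)
  have KS: "K \<subseteq> S" unfolding K_def using closure_minimal[OF TS S(2)] by blast
  have TK: "T ` S \<subseteq> K" unfolding K_def using C(2) closure_subset by blast
  have Kne: "K \<noteq> {}" using TK S(1) by blast
  have approx: "\<exists>x\<in>S. norm (T x - x) < inverse (real (Suc k))" for k
  proof -
    have "inverse (real (Suc k)) / 2 > 0" by simp
    from schauder_approx[OF S(3) Tc Kc KS TK Kne this] show ?thesis by simp
  qed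
  obtain xs where xs: "\<And>k. xs k \<in> S" "\<And>k. norm (T (xs k) - xs k) < inverse (real (Suc k))"
    using approx by metis
  have "\<forall>k. T (xs k) \<in> K" using xs(1) TK by blast
  then obtain l r where l: "l \<in> K" and r: "strict_mono r" and lim: "((\<lambda>k. T (xs k)) \<circ> r) \<longlonglongrightarrow> l"
    using Kc unfolding compact_def by metis
  have lim1: "(\<lambda>k. T (xs (r k))) \<longlonglongrightarrow> l" using lim by (simp add: o_def)
  have lim0: "(\<lambda>k. T (xs (r k)) - xs (r k)) \<longlonglongrightarrow> 0"
  proof (rule Lim_null_comparison)
    show "\<forall>\<^sub>F k in sequentially. norm (T (xs (r k)) - xs (r k)) \<le> inverse (real (Suc k))"
    proof (intro always_eventually allI)
      fix k
      have "k \<le> r k" using seq_suble[OF r] by simp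
      then have "inverse (real (Suc (r k))) \<le> inverse (real (Suc k))"
        by (intro le_imp_inverse_le) auto
      then show "norm (T (xs (r k)) - xs (r k)) \<le> inverse (real (Suc k))"
        using xs(2)[of "r k"] by linarith
    qed
    show "(\<lambda>k. inverse (real (Suc k))) \<longlonglongrightarrow> 0" by (rule LIMSEQ_inverse_real_of_nat)
  qed
  have lim2: "(\<lambda>k. xs (r k)) \<longlonglongrightarrow> l"
  proof -
    have "(\<lambda>k. T (xs (r k)) - (T (xs (r k)) - xs (r k))) \<longlonglongrightarrow> l - 0"
      by (intro tendsto_diff lim1 lim0)
    then show ?thesis by simp
  qed
  have lS: "l \<in> S" using l KS by blast
  have "(\<lambda>k. T (xs (r k))) \<longlonglongrightarrow> T l"
    by (rule continuous_on_tendsto_compose[OF Tc lim2 lS]) (use xs(1) in auto)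
  then have "T l = l" using lim1 by (rule LIMSEQ_unique)
  then show ?thesis using lS by blast
qed

theorem theorem3p2:
  fixes P S :: "'a::banach set" and A B :: "'a \<Rightarrow> 'a"
    and \<psi> \<theta> \<phi> :: "real \<Rightarrow> real" and x0 :: 'a
  assumes cone: "is_cone P" and int: "interior P \<noteq> {}"
    and upc: "upper_comparable P"
    and S: "S \<noteq> {}" "closed S" "convex S" "bounded S"
    and psi: "gen_altering_distance \<psi>"
    and theta: "\<forall>t\<ge>0. \<theta> t \<ge> 0" "usc_on {0..} \<theta>" "\<theta> 0 = 0"
    and phi: "\<forall>t\<ge>0. \<phi> t \<ge> 0" "lsc_on {0..} \<phi>" "\<phi> 0 = 0"
    and pos: "\<forall>t>0. \<psi> t - \<theta> t + \<phi> t > 0"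
    and contr: "\<forall>x y. cone_le P y x \<longrightarrow>
                  \<psi> (norm (A x - A y)) \<le> \<theta> (norm (x - y)) - \<phi> (norm (x - y))"
    and x0: "cone_le P x0 (A x0)"
    and Acont: "continuous_on UNIV A"
    and Amono: "\<forall>x y. cone_le P x y \<longrightarrow> cone_le P (A x) (A y)"
    and IA: "bij (\<lambda>x. x - A x)" "continuous_on UNIV (inv (\<lambda>x. x - A x))"
    and Bcont: "continuous_on S B"
    and Bcpt: "\<exists>K. compact K \<and> K \<subseteq> P \<and> B ` S \<subseteq> K"
    and e: "\<forall>y\<in>S. \<forall>x. x = A x + B y \<longrightarrow> x \<in> S"
  shows "\<exists>z\<in>S. A z + B z = z"
  
proof -
  define L where "L = (\<lambda>x::'a. x - A x)"
  have sL: "surj L" using IA(1) unfolding L_def by (simp add: bij_is_surj)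
  have LL: "L (inv L y) = y" for y using surj_f_inv_f[OF sL] .
  have Lc: "continuous_on UNIV (inv L)" using IA(2) unfolding L_def .
  define T where "T = (\<lambda>y. inv L (B y))"
  have TS: "T ` S \<subseteq> S"
  proof
    fix x assume "x \<in> T ` S"
    then obtain y where y: "y \<in> S" "x = T y" by blast
    have "L x = B y" using y(2) LL unfolding T_def by simp
    then have "x = A x + B y" unfolding L_def by (simp add: algebra_simps)
    then show "x \<in> S" using e y(1) by blast
  qed
  have Tc: "continuous_on S T"
    unfolding T_def using continuous_on_compose[OF Bcont continuous_on_subset[OF Lc subset_UNIV]]
    by (simp add: o_def)
  obtain K where K: "compact K" "K \<subseteq> P" "B ` S \<subseteq> K" using Bcpt by blast
  have C: "compact (inv L ` K)"
    by (rule compact_continuous_image[OF continuous_on_subset[OF Lc subset_UNIV] K(1)])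
  have TC: "T ` S \<subseteq> inv L ` K" unfolding T_def using K(3) by blast
  obtain z where z: "z \<in> S" "T z = z" using schauder[OF S(1,2,3) Tc TS C TC] by blast
  have "L z = B z" using z(2) LL[of "B z"] unfolding T_def by simp
  then have "A z + B z = z" unfolding L_def by (simp add: algebra_simps)
  then show ?thesis using z(1) by blast
qed

end
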